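(* Let a preference profile with $n$ men and $n$ women be given. If some stable matching of this profile contains a hell-couple consisting of man $A$ and woman $Z$, then every stable matching of this profile matches $A$ with $Z$.
   Context: Each of $n$ men strictly ranks the $n$ women by a bijection to $\{1,\dots,n\}$ (1 = favorite, $n$ = least favorite), and each woman strictly ranks the $n$ men likewise. A matching is a perfect pairing of men with women. A matching is stable if there is no man $M$ and woman $W$, not matched to each other, such that each prefers the other to their assigned partner. A hell-pair is a man and a woman who rank each other $n$ (last); a hell-couple in a matching is a hell-pair who are matched to each other. *)

theory Defs
  imports Main
begin

text \<open>Men and women are both indexed by {0..<n}. mp m w is the rank man m gives woman w,
  wp w m is the rank woman w gives man m (1 = favourite, n = least favourite).\<close>

definition preference_profile :: "nat \<Rightarrow> (nat \<Rightarrow> nat \<Rightarrow> nat) \<Rightarrow> (nat \<Rightarrow> nat \<Rightarrow> nat) \<Rightarrow> bool" where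
  "preference_profile n mp wp \<longleftrightarrow>
     (\<forall>m<n. bij_betw (mp m) {0..<n} {1..n}) \<and> (\<forall>w<n. bij_betw (wp w) {0..<n} {1..n})"

definition matching :: "nat \<Rightarrow> (nat \<Rightarrow> nat) \<Rightarrow> bool" where
  "matching n mu \<longleftrightarrow> bij_betw mu {0..<n} {0..<n}"

definition stable :: "nat \<Rightarrow> (nat \<Rightarrow> nat \<Rightarrow> nat) \<Rightarrow> (nat \<Rightarrow> nat \<Rightarrow> nat) \<Rightarrow> (nat \<Rightarrow> nat) \<Rightarrow> bool" where
  "stable n mp wp mu \<longleftrightarrow> matching n mu \<and>
     \<not> (\<exists>m<n. \<exists>w<n. \<exists>m'<n. mu m' = w \<and> mu m \<noteq> w \<and>
            mp m w < mp m (mu m) \<and> wp w m < wp w m')"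

definition hell_pair :: "nat \<Rightarrow> (nat \<Rightarrow> nat \<Rightarrow> nat) \<Rightarrow> (nat \<Rightarrow> nat \<Rightarrow> nat) \<Rightarrow> nat \<Rightarrow> nat \<Rightarrow> bool" where
  "hell_pair n mp wp m w \<longleftrightarrow> m < n \<and> w < n \<and> mp m w = n \<and> wp w m = n"

definition hell_couple :: "nat \<Rightarrow> (nat \<Rightarrow> nat \<Rightarrow> nat) \<Rightarrow> (nat \<Rightarrow> nat \<Rightarrow> nat) \<Rightarrow> (nat \<Rightarrow> nat) \<Rightarrow> nat \<Rightarrow> nat \<Rightarrow> bool" where
  "hell_couple n mp wp mu m w \<longleftrightarrow> hell_pair n mp wp m w \<and> mu m = w"

end

theory Submission
  imports Defs
begin

theorem mainTheorem7:
  fixes n :: nat and mp wp :: "nat \<Rightarrow> nat \<Rightarrow> nat" and mu nu :: "nat \<Rightarrow> nat" and A Z :: nat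
  assumes "preference_profile n mp wp"
    and "stable n mp wp mu"
    and "hell_couple n mp wp mu A Z"
    and "stable n mp wp nu"
  shows "nu A = Z"
proof (rule ccontr)
  assume ne: "nu A \<noteq> Z"
  have mpb: "\<And>m. m < n \<Longrightarrow> bij_betw (mp m) {0..<n} {1..n}"
   and wpb: "\<And>w. w < n \<Longrightarrow> bij_betw (wp w) {0..<n} {1..n}"
    using assms(1) unfolding preference_profile_def by auto
  have mub: "bij_betw mu {0..<n} {0..<n}" and nub: "bij_betw nu {0..<n} {0..<n}"
    using assms(2,4) unfolding stable_def matching_def by auto
  have smu: "\<And>m w m'. m < n \<Longrightarrow> w < n \<Longrightarrow> m' < n \<Longrightarrow> mu m' = w \<Longrightarrow> mu m \<noteq> w \<Longrightarrow>
      \<not> (mp m w < mp m (mu m) \<and> wp w m < wp w m')"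
    using assms(2) unfolding stable_def by blast
  have snu: "\<And>m w m'. m < n \<Longrightarrow> w < n \<Longrightarrow> m' < n \<Longrightarrow> nu m' = w \<Longrightarrow> nu m \<noteq> w \<Longrightarrow>
      \<not> (mp m w < mp m (nu m) \<and> wp w m < wp w m')"
    using assms(4) unfolding stable_def by blast
  have hA: "A < n" "Z < n" "mp A Z = n" "wp Z A = n" "mu A = Z"
    using assms(3) unfolding hell_couple_def hell_pair_def by auto
  have muin: "\<And>m. m < n \<Longrightarrow> mu m < n" using mub by (auto simp: bij_betw_def)
  have nuin: "\<And>m. m < n \<Longrightarrow> nu m < n" using nub by (auto simp: bij_betw_def)
  have muinj: "\<And>a b. a < n \<Longrightarrow> b < n \<Longrightarrow> mu a = mu b \<Longrightarrow> a = b"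
    using mub by (auto simp: bij_betw_def inj_on_def)
  have nuinj: "\<And>a b. a < n \<Longrightarrow> b < n \<Longrightarrow> nu a = nu b \<Longrightarrow> a = b"
    using nub by (auto simp: bij_betw_def inj_on_def)
  have mpinj: "\<And>m a b. m < n \<Longrightarrow> a < n \<Longrightarrow> b < n \<Longrightarrow> mp m a = mp m b \<Longrightarrow> a = b"
    using mpb unfolding bij_betw_def inj_on_def by (meson atLeastLessThan_iff zero_le)
  have wpinj: "\<And>m a b. m < n \<Longrightarrow> a < n \<Longrightarrow> b < n \<Longrightarrow> wp m a = wp m b \<Longrightarrow> a = b"
    using wpb unfolding bij_betw_def inj_on_def by (meson atLeastLessThan_iff zero_le)
  have mple: "\<And>m a. m < n \<Longrightarrow> a < n \<Longrightarrow> mp m a \<le> n"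
    using mpb unfolding bij_betw_def by (metis atLeastAtMost_iff atLeastLessThan_iff image_eqI zero_le)
  have wple: "\<And>m a. m < n \<Longrightarrow> a < n \<Longrightarrow> wp m a \<le> n"
    using wpb unfolding bij_betw_def by (metis atLeastAtMost_iff atLeastLessThan_iff image_eqI zero_le)
  have musurj: "\<And>w. w < n \<Longrightarrow> \<exists>m<n. mu m = w"
    using mub unfolding bij_betw_def by (metis atLeastLessThan_iff imageE zero_le)
  define g where "g = (\<lambda>m. inv_into {0..<n} mu (nu m))"
  have g: "\<And>m. m < n \<Longrightarrow> g m < n \<and> mu (g m) = nu m"
  proof -
    fix m assume "m < n"
    then have "nu m \<in> mu ` {0..<n}" using nuin musurj by force
    then show "g m < n \<and> mu (g m) = nu m" unfolding g_def
      by (metis atLeastLessThan_iff f_inv_into_f inv_into_into)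
  qed
  define M where "M = {m. m < n \<and> mp m (nu m) < mp m (mu m)}"
  have key: "\<And>m. m \<in> M \<Longrightarrow> wp (nu m) (g m) < wp (nu m) m"
  proof -
    fix m assume "m \<in> M"
    then have m: "m < n" "mp m (nu m) < mp m (mu m)" unfolding M_def by auto
    have "mu m \<noteq> nu m" using m by auto
    then have "g m \<noteq> m" using g[OF m(1)] by auto
    have "\<not> (wp (nu m) m < wp (nu m) (g m))"
      using smu[of m "nu m" "g m"] g[OF m(1)] m nuin \<open>mu m \<noteq> nu m\<close> by auto
    moreover have "wp (nu m) m \<noteq> wp (nu m) (g m)"
      using wpinj[of "nu m" m "g m"] g[OF m(1)] m nuin \<open>g m \<noteq> m\<close> by auto
    ultimately show "wp (nu m) (g m) < wp (nu m) m" by auto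
  qed
  have gM: "g ` M \<subseteq> M"
  proof
    fix x assume "x \<in> g ` M"
    then obtain m where mM: "m \<in> M" and x: "x = g m" by auto
    then have m: "m < n" unfolding M_def by auto
    have gm: "g m < n" "mu (g m) = nu m" using g[OF m] by auto
    have "g m \<noteq> m" using mM gm unfolding M_def by auto
    then have "nu (g m) \<noteq> nu m" using nuinj gm m by blast
    then have "\<not> mp (g m) (nu m) < mp (g m) (nu (g m))"
      using snu[of "g m" "nu m" m] key[OF mM] gm m nuin by auto
    moreover have "mp (g m) (nu m) \<noteq> mp (g m) (nu (g m))"
      using mpinj[of "g m" "nu m" "nu (g m)"] gm m nuin \<open>nu (g m) \<noteq> nu m\<close> by auto
    ultimately show "x \<in> M" unfolding M_def using x gm by auto
  qed
  have finM: "finite M" unfolding M_def by auto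
  have injg: "inj_on g M"
    unfolding inj_on_def M_def using g nuinj by (metis mem_Collect_eq)
  have "g ` M = M"
    using finM injg gM by (meson card_image card_subset_eq)
  moreover have "A \<in> M"
  proof -
    have "mp A (nu A) \<noteq> n" using mpinj[of A "nu A" Z] hA ne nuin by auto
    then show ?thesis using mple[of A "nu A"] hA nuin unfolding M_def by auto
  qed
  ultimately obtain m where mM: "m \<in> M" and "A = g m" by force
  then have m: "m < n" and "nu m = Z" using g hA unfolding M_def by auto
  then have "wp Z A < wp Z m" using key[OF mM] \<open>A = g m\<close> by simp
  then show False using wple[of Z m] hA m by auto
qed

end
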